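(* Let $L$ be an $n\times n$ nonsingular M-matrix with integer entries. For every $f\in\mathbb{Z}^n$ with $f\ge 0$, the problem $$\min_{g\sim f,\ g\ge 0} E(g)$$ (minimum over $g\in\mathbb{Z}^n$) has a unique solution.
   Context: A Z-matrix is a square real matrix whose off-diagonal entries are all $\le 0$. A nonsingular M-matrix is a Z-matrix $L$ that is invertible with $L^{-1}$ having all entries nonnegative. Vector inequalities are entrywise. For $f,g\in\mathbb{Z}^n$, $f\sim g$ means $g-f=Lz$ for some $z\in\mathbb{Z}^n$. For $q\in\mathbb{Z}^n$ the energy is $E(q)=\|L^{-1}q\|_2^2$, where $\|v\|_2^2=v\cdot v$. *)

theory Defs
  imports "HOL-Analysis.Analysis"
begin

definition real_mat :: "int^'n^'n \<Rightarrow> real^'n^'n" where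
  "real_mat L = (\<chi> i j. of_int (L $ i $ j))"

definition real_vec :: "int^'n \<Rightarrow> real^'n" where
  "real_vec q = (\<chi> i. of_int (q $ i))"

definition Z_matrix :: "real^'n^'n \<Rightarrow> bool" where
  "Z_matrix A \<longleftrightarrow> (\<forall>i j. i \<noteq> j \<longrightarrow> A $ i $ j \<le> 0)"

definition nonsingular_M_matrix :: "real^'n^'n \<Rightarrow> bool" where
  "nonsingular_M_matrix A \<longleftrightarrow>
     Z_matrix A \<and> invertible A \<and> (\<forall>i j. matrix_inv A $ i $ j \<ge> 0)"

definition vec_nonneg :: "int^'n \<Rightarrow> bool" where
  "vec_nonneg q \<longleftrightarrow> (\<forall>i. q $ i \<ge> 0)"

definition lat_equiv :: "int^'n^'n \<Rightarrow> int^'n \<Rightarrow> int^'n \<Rightarrow> bool" where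
  "lat_equiv L f g \<longleftrightarrow> (\<exists>z::int^'n. g - f = L *v z)"

definition energy :: "int^'n^'n \<Rightarrow> int^'n \<Rightarrow> real" where
  "energy L q = (let v = matrix_inv (real_mat L) *v real_vec q in v \<bullet> v)"

end

theory Submission
  imports Defs
begin

lemma rv_add: "real_vec (a + b) = real_vec a + real_vec b"
  by (simp add: real_vec_def vec_eq_iff)

lemma rv_mult: "real_vec (L *v z) = real_mat L *v real_vec z"
  by (simp add: real_vec_def real_mat_def vec_eq_iff matrix_vector_mult_def)

lemma rv_inj: "real_vec a = real_vec b \<Longrightarrow> a = b"
  by (simp add: real_vec_def vec_eq_iff)

lemma inv_props:
  fixes A :: "real^'n^'n"
  assumes "invertible A"
  shows "A ** matrix_inv A = mat 1" "matrix_inv A ** A = mat 1"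
proof -
  have "\<exists>A'. A ** A' = mat 1 \<and> A' ** A = mat 1" using assms unfolding invertible_def by blast
  from someI_ex[OF this] show "A ** matrix_inv A = mat 1" "matrix_inv A ** A = mat 1"
    unfolding matrix_inv_def by auto
qed

lemma finite_box:
  fixes T :: "int set"
  assumes "finite T"
  shows "finite {g::int^'n. \<forall>i. g$i \<in> T}"
proof -
  have "{g::int^'n. \<forall>i. g$i \<in> T} \<subseteq> (\<lambda>h. vec_lambda h) ` (PiE UNIV (\<lambda>_. T))"
  proof
    fix g :: "int^'n" assume "g \<in> {g. \<forall>i. g$i \<in> T}"
    then show "g \<in> (\<lambda>h. vec_lambda h) ` (PiE UNIV (\<lambda>_. T))"
      by (intro image_eqI[where x="vec_nth g"]) (auto simp: PiE_iff)
  qed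
  moreover have "finite (PiE (UNIV::'n set) (\<lambda>_. T))" using assms by (intro finite_PiE) auto
  ultimately show ?thesis by (meson finite_imageI finite_subset)
qed

theorem mainTheorem3:
  fixes L :: "int^'n^'n" and f :: "int^'n"
  assumes "nonsingular_M_matrix (real_mat L)"
    and "vec_nonneg f"
  shows "\<exists>!g. vec_nonneg g \<and> lat_equiv L f g \<and>
           (\<forall>h. vec_nonneg h \<and> lat_equiv L f h \<longrightarrow> energy L g \<le> energy L h)"
proof -
  define A where "A = real_mat L"
  define B where "B = matrix_inv A"
  define x where "x = B *v real_vec f"
  have Z: "\<And>i j. i \<noteq> j \<Longrightarrow> L$i$j \<le> 0"
    using assms(1) unfolding nonsingular_M_matrix_def Z_matrix_def real_mat_def by auto
  have inv: "invertible A" and Bnn: "\<And>i j. B$i$j \<ge> 0"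
    using assms(1) unfolding nonsingular_M_matrix_def A_def B_def by auto
  have AB: "A ** B = mat 1" and BA: "B ** A = mat 1" using inv_props[OF inv] B_def by auto
  have Bg: "B *v real_vec (f + L *v z) = x + real_vec z" for z
    by (simp add: rv_add rv_mult x_def matrix_vector_right_distrib matrix_vector_mul_assoc BA A_def[symmetric])
  have en: "energy L g = (\<Sum>i\<in>UNIV. ((B *v real_vec g)$i)^2)" for g
    by (simp add: energy_def Let_def A_def[symmetric] B_def[symmetric] inner_vec_def power2_eq_square)
  have nn: "(B *v real_vec g)$i \<ge> 0" if "vec_nonneg g" for g i
    using that Bnn unfolding matrix_vector_mult_def vec_nonneg_def real_vec_def
    by (auto intro!: sum_nonneg)
  define P where "P g \<longleftrightarrow> vec_nonneg g \<and> lat_equiv L f g" for g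
  have Pz: "P g \<Longrightarrow> \<exists>z. g = f + L *v z" for g
    unfolding P_def lat_equiv_def by (metis add.commute diff_add_cancel)
  have uniq: "g1 = g2" if p1: "P g1" and p2: "P g2"
    and m1: "\<forall>h. P h \<longrightarrow> energy L g1 \<le> energy L h"
    and m2: "\<forall>h. P h \<longrightarrow> energy L g2 \<le> energy L h" for g1 g2
  proof (rule ccontr)
    assume ne: "g1 \<noteq> g2"
    obtain z1 where z1: "g1 = f + L *v z1" using Pz p1 by blast
    obtain z2 where z2: "g2 = f + L *v z2" using Pz p2 by blast
    define zm where "zm = (\<chi> i. min (z1$i) (z2$i))"
    define gm where "gm = f + L *v zm"
    have gmnn: "vec_nonneg gm"
      unfolding vec_nonneg_def
    proof
      fix i
      have key: "gm$i \<ge> g$i" if "g = f + L *v z" "zm$i = z$i" "\<forall>j. zm$j \<le> z$j" for g z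
      proof -
        have "gm$i - g$i = (\<Sum>j\<in>UNIV. L$i$j * (zm$j - z$j))"
          using that(1) by (simp add: gm_def matrix_vector_mult_def sum_subtractf right_diff_distrib)
        also have "\<dots> \<ge> 0"
        proof (rule sum_nonneg)
          fix j show "0 \<le> L$i$j * (zm$j - z$j)"
            using Z[of i j] that(2,3) by (cases "i = j") (auto intro: mult_nonpos_nonpos)
        qed
        finally show ?thesis by simp
      qed
      have a1: "\<forall>j. zm$j \<le> z1$j" "\<forall>j. zm$j \<le> z2$j" by (auto simp: zm_def)
      have "zm$i = z1$i \<or> zm$i = z2$i" by (auto simp: zm_def min_def)
      hence "gm$i \<ge> g1$i \<or> gm$i \<ge> g2$i"
        using key[OF z1 _ a1(1)] key[OF z2 _ a1(2)] by blast
      moreover have "g1$i \<ge> 0" "g2$i \<ge> 0" using p1 p2 unfolding P_def vec_nonneg_def by auto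
      ultimately show "0 \<le> gm$i" by linarith
    qed
    have Pm: "P gm" unfolding P_def lat_equiv_def using gmnn by (auto simp: gm_def)
    have u1: "x$i + of_int (z1$i) \<ge> 0" for i
    proof -
      have "(B *v real_vec g1)$i = (x + real_vec z1)$i" using Bg[of z1] z1 by simp
      thus ?thesis using nn[of g1 i] p1 unfolding P_def by (simp add: real_vec_def)
    qed
    have u2: "x$i + of_int (z2$i) \<ge> 0" for i
    proof -
      have "(B *v real_vec g2)$i = (x + real_vec z2)$i" using Bg[of z2] z2 by simp
      thus ?thesis using nn[of g2 i] p2 unfolding P_def by (simp add: real_vec_def)
    qed
    have E: "energy L (f + L *v z) = (\<Sum>i\<in>UNIV. (x$i + of_int (z$i))^2)" for z
      unfolding en Bg by (simp add: real_vec_def)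
    have zne: "z1 \<noteq> z2" using ne z1 z2 by auto
    then obtain i where "z1$i \<noteq> z2$i" by (auto simp: vec_eq_iff)
    hence "zm$i < z1$i \<or> zm$i < z2$i" by (auto simp: zm_def)
    moreover have le1: "\<And>j. (x$j + of_int (zm$j))^2 \<le> (x$j + of_int (z1$j))^2"
      using u1 u2 by (auto simp: zm_def min_def intro!: power_mono)
    moreover have le2: "\<And>j. (x$j + of_int (zm$j))^2 \<le> (x$j + of_int (z2$j))^2"
      using u1 u2 by (auto simp: zm_def min_def intro!: power_mono)
    ultimately have "energy L gm < energy L g1 \<or> energy L gm < energy L g2"
    proof (elim disjE)
      assume "zm$i < z1$i"
      hence "x$i + of_int (zm$i) < x$i + of_int (z1$i)" by simp
      moreover have "0 \<le> x$i + of_int (zm$i)" using u1[of i] u2[of i] by (auto simp: zm_def min_def)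
      ultimately have "(x$i + of_int (zm$i))^2 < (x$i + of_int (z1$i))^2"
        by (intro power_strict_mono) auto
      hence "energy L gm < energy L g1"
        unfolding gm_def z1 E by (intro sum_strict_mono_ex1) (auto intro: le1)
      thus ?thesis by blast
    next
      assume "zm$i < z2$i"
      hence "x$i + of_int (zm$i) < x$i + of_int (z2$i)" by simp
      moreover have "0 \<le> x$i + of_int (zm$i)" using u1[of i] u2[of i] by (auto simp: zm_def min_def)
      ultimately have "(x$i + of_int (zm$i))^2 < (x$i + of_int (z2$i))^2"
        by (intro power_strict_mono) auto
      hence "energy L gm < energy L g2"
        unfolding gm_def z2 E by (intro sum_strict_mono_ex1) (auto intro: le2)
      thus ?thesis by blast
    qed
    thus False using m1 m2 Pm by force
  qed
  define S where "S = {g. P g \<and> energy L g \<le> energy L f}"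
  obtain K where K: "\<And>u. norm (A *v u) \<le> norm u * K" "K \<ge> 0"
    using bounded_linear.nonneg_bounded[OF matrix_vector_mul_bounded_linear[of A]] by blast
  define M where "M = sqrt (energy L f) * K"
  have fin: "finite S"
  proof -
    have "S \<subseteq> {g. \<forall>i. g$i \<in> {-\<lceil>M\<rceil>..\<lceil>M\<rceil>}}"
    proof safe
      fix g i assume "g \<in> S"
      hence eg: "energy L g \<le> energy L f" by (auto simp: S_def)
      define u where "u = B *v real_vec g"
      have ru: "real_vec g = A *v u" by (simp add: u_def matrix_vector_mul_assoc AB)
      have "energy L g = norm u ^ 2"
        by (simp add: energy_def Let_def A_def[symmetric] B_def[symmetric] u_def[symmetric] dot_square_norm)
      hence "norm u \<le> sqrt (energy L f)" using eg by (metis norm_ge_zero real_le_rsqrt)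
      hence nb: "norm u * K \<le> sqrt (energy L f) * K" using K(2) by (rule mult_right_mono)
      have "\<bar>real_of_int (g$i)\<bar> = \<bar>real_vec g $ i\<bar>" by (simp add: real_vec_def)
      also have "\<dots> \<le> norm (real_vec g)" by (rule component_le_norm_cart)
      also have "\<dots> \<le> norm u * K" using K(1) ru by simp
      also have "\<dots> \<le> M" using nb by (simp add: M_def)
      finally have "\<bar>real_of_int (g$i)\<bar> \<le> M" .
      hence "\<bar>g$i\<bar> \<le> \<lceil>M\<rceil>" by linarith
      thus "g$i \<in> {-\<lceil>M\<rceil>..\<lceil>M\<rceil>}" by auto
    qed
    thus ?thesis using finite_box[of "{-\<lceil>M\<rceil>..\<lceil>M\<rceil>}"] finite_subset by blast
  qed
  have Pf: "P f" using assms(2) unfolding P_def lat_equiv_def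
    by (auto intro!: exI[of _ 0] simp: vec_eq_iff matrix_vector_mult_def)
  hence fS: "f \<in> S" by (simp add: S_def)
  have "Min (energy L ` S) \<in> energy L ` S" using fin fS by (intro Min_in) auto
  then obtain g where gS: "g \<in> S" and gmin: "energy L g = Min (energy L ` S)" by auto
  have gm: "\<forall>h. P h \<longrightarrow> energy L g \<le> energy L h"
  proof safe
    fix h assume "P h"
    show "energy L g \<le> energy L h"
    proof (cases "energy L h \<le> energy L f")
      case True
      hence "h \<in> S" using \<open>P h\<close> by (simp add: S_def)
      thus ?thesis using fin gmin by simp
    next
      case False thus ?thesis using gS by (simp add: S_def)
    qed
  qed
  show ?thesis
    apply (rule ex1I[of _ g])
    using gS gm uniq unfolding P_def S_def by blast+
qed

end
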